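(* Let $k\in\mathbb{R}_{\ge0}$ and $p\in\mathbb{R}_+$. Let $(x,y,z)$ be a triple of the classical Euclid tree with $x,y,z>k/p$, $(X,Y,Z)$ the corresponding triple of the $k$-generalized Euclid tree, and $(l,m,n)=(X/x,Y/y,Z/z)$. If $\max(|l-m|,|m-n|,|l-n|)<2p$, then for every $i\in\{1,2,3\}$ the comparison triple $(l',m',n')$ of $\mathcal{M}_{i;k}(X,Y,Z)$ and $\mathcal{M}_i(x,y,z)$ also satisfies $\max(|l'-m'|,|m'-n'|,|l'-n'|)<2p$; hence this bound persists under any further sequence of mutations.
   Context: For $k\in\mathbb{R}_{\ge0}$: $\mathcal{M}_{1;k}(X,Y,Z)=(k+Y+Z,Y,Z)$, $\mathcal{M}_{2;k}(X,Y,Z)=(X,k+X+Z,Z)$, $\mathcal{M}_{3;k}(X,Y,Z)=(X,Y,k+X+Y)$ on $\mathbb{R}_+^3$, $\mathcal{M}_i=\mathcal{M}_{i;0}$. The classical Euclid tree consists of triples obtained from a $0$-initial triple $(a,b,c)\in\mathbb{R}_+^3$ by applying the $\mathcal{M}_i$ along a finite reduced index sequence (consecutive indices distinct); the $k$-generalized Euclid tree consists of triples obtained from a $k$-initial triple $(A,B,C)\in\mathbb{R}_+^3$ ($A\ne B+C+k$, $B\ne A+C+k$, $C\ne A+B+k$) by applying the $\mathcal{M}_{i;k}$; corresponding triples are obtained along the same index sequence. *)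

theory Defs
  imports Main Complex_Main
begin

type_synonym triple = "real \<times> real \<times> real"

text \<open>The mutation M_{i;k}; indices are 1,2,3 (other indices act as identity, never used).\<close>
fun mut :: "real \<Rightarrow> nat \<Rightarrow> triple \<Rightarrow> triple" where
  "mut k i (X, Y, Z) =
     (if i = 1 then (k + Y + Z, Y, Z)
      else if i = 2 then (X, k + X + Z, Z)
      else if i = 3 then (X, Y, k + X + Y)
      else (X, Y, Z))"

definition apply_seq :: "real \<Rightarrow> nat list \<Rightarrow> triple \<Rightarrow> triple" where
  "apply_seq k is t = foldl (\<lambda>u i. mut k i u) t is"

definition reduced_seq :: "nat list \<Rightarrow> bool" where
  "reduced_seq is \<longleftrightarrow> set is \<subseteq> {1,2,3} \<and>
     (\<forall>j. Suc j < length is \<longrightarrow> is ! j \<noteq> is ! Suc j)"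

definition pos_triple :: "triple \<Rightarrow> bool" where
  "pos_triple t \<longleftrightarrow> (case t of (A, B, C) \<Rightarrow> A > 0 \<and> B > 0 \<and> C > 0)"

definition initial_triple :: "real \<Rightarrow> triple \<Rightarrow> bool" where
  "initial_triple k t \<longleftrightarrow> pos_triple t \<and>
     (case t of (A, B, C) \<Rightarrow> A \<noteq> B + C + k \<and> B \<noteq> A + C + k \<and> C \<noteq> A + B + k)"

definition comparison :: "triple \<Rightarrow> triple \<Rightarrow> triple" where
  "comparison T t = (case T of (X, Y, Z) \<Rightarrow> case t of (x, y, z) \<Rightarrow> (X / x, Y / y, Z / z))"

definition spread :: "triple \<Rightarrow> real" where
  "spread t = (case t of (l, m, n) \<Rightarrow> max \<bar>l - m\<bar> (max \<bar>m - n\<bar> \<bar>l - n\<bar>))"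

end

theory Submission
  imports Defs
begin

lemma key:
  fixes k p y z m n :: real
  assumes "p > 0" "y > 0" "z > 0" "k \<ge> 0" "k < p * y" "k < p * z" "\<bar>m - n\<bar> < 2 * p"
  shows "\<bar>(k + m * y + n * z) / (y + z) - m\<bar> < 2 * p"
proof -
  have e: "(k + m * y + n * z) / (y + z) - m = (k + (n - m) * z) / (y + z)"
    using assms by (simp add: field_simps)
  have "\<bar>k + (n - m) * z\<bar> < 2 * p * (y + z)"
  proof -
    have "\<bar>(n - m) * z\<bar> \<le> \<bar>m - n\<bar> * z" using assms by (simp add: abs_mult)
    also have "\<dots> \<le> 2 * p * z" using assms by (intro mult_right_mono) auto
    finally show ?thesis using assms by (simp add: abs_le_iff abs_less_iff algebra_simps)
  qed
  then show ?thesis unfolding e using assms by (simp add: abs_divide pos_divide_less_eq)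
qed

lemma key2:
  fixes k p y z m n :: real
  assumes "p > 0" "y > 0" "z > 0" "k \<ge> 0" "k < p * y" "k < p * z" "\<bar>m - n\<bar> < 2 * p"
  shows "\<bar>(k + m * y + n * z) / (y + z) - n\<bar> < 2 * p"
  using key[of p z y k n m] assms by (simp add: add.commute add.left_commute abs_minus_commute)

theorem lemma5p7:
  fixes k p x y z X Y Z :: real and "is" :: "nat list" and a b c A B C :: real
  assumes "k \<ge> 0" and "p > 0"
    and "reduced_seq is"
    and "initial_triple 0 (a, b, c)"
    and "initial_triple k (A, B, C)"
    and "apply_seq 0 is (a, b, c) = (x, y, z)"
    and "apply_seq k is (A, B, C) = (X, Y, Z)"
    and "x > k / p" and "y > k / p" and "z > k / p"
    and "spread (comparison (X, Y, Z) (x, y, z)) < 2 * p"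
  shows "\<forall>i \<in> {1, 2, 3}. spread (comparison (mut k i (X, Y, Z)) (mut 0 i (x, y, z))) < 2 * p"
proof -
  have kp: "k / p \<ge> 0" using assms by simp
  have x0: "x > 0" and y0: "y > 0" and z0: "z > 0" using kp assms by linarith+
  have kx: "k < p * x" and ky: "k < p * y" and kz: "k < p * z"
    using assms by (simp_all add: pos_divide_less_eq mult.commute)
  define l m n where "l = X / x" and "m = Y / y" and "n = Z / z"
  have XX: "X = l * x" "Y = m * y" "Z = n * z" using x0 y0 z0 l_def m_def n_def by simp_all
  have sp: "\<bar>l - m\<bar> < 2 * p" "\<bar>m - n\<bar> < 2 * p" "\<bar>l - n\<bar> < 2 * p"
    using assms(11) by (simp_all add: spread_def comparison_def l_def m_def n_def)
  have sp': "\<bar>m - l\<bar> < 2 * p" "\<bar>n - m\<bar> < 2 * p" "\<bar>n - l\<bar> < 2 * p"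
    using sp by (simp_all add: abs_minus_commute)
  have c1: "spread (comparison (mut k 1 (X, Y, Z)) (mut 0 1 (x, y, z))) < 2 * p"
  proof -
    have a1: "\<bar>(k + m * y + n * z) / (y + z) - m\<bar> < 2 * p"
      by (rule key) (use assms y0 z0 ky kz sp in auto)
    have a2: "\<bar>(k + m * y + n * z) / (y + z) - n\<bar> < 2 * p"
      by (rule key2) (use assms y0 z0 ky kz sp in auto)
    show ?thesis using a1 a2 sp y0 z0 unfolding spread_def comparison_def XX by simp
  qed
  have c2: "spread (comparison (mut k 2 (X, Y, Z)) (mut 0 2 (x, y, z))) < 2 * p"
  proof -
    have a1: "\<bar>(k + l * x + n * z) / (x + z) - l\<bar> < 2 * p"
      by (rule key) (use assms x0 z0 kx kz sp in auto)
    have a2: "\<bar>(k + l * x + n * z) / (x + z) - n\<bar> < 2 * p"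
      by (rule key2) (use assms x0 z0 kx kz sp in auto)
    show ?thesis using a1 a2 sp x0 z0 unfolding spread_def comparison_def XX
      by (simp add: abs_minus_commute)
  qed
  have c3: "spread (comparison (mut k 3 (X, Y, Z)) (mut 0 3 (x, y, z))) < 2 * p"
  proof -
    have a1: "\<bar>(k + l * x + m * y) / (x + y) - l\<bar> < 2 * p"
      by (rule key) (use assms x0 y0 kx ky sp in auto)
    have a2: "\<bar>(k + l * x + m * y) / (x + y) - m\<bar> < 2 * p"
      by (rule key2) (use assms x0 y0 kx ky sp in auto)
    show ?thesis using a1 a2 sp x0 y0 unfolding spread_def comparison_def XX
      by (simp add: abs_minus_commute)
  qed
  show ?thesis using c1 c2 c3 by simp
qed

end
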